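(* For odd $m$, $s_1^{(m)\dagger}\Omega_m s_2^{(m)}=1$, where $\Omega_m=\begin{pmatrix}0&\mathbb{1}\\\mathbb{1}&0\end{pmatrix}$ is the $2m\times 2m$ symplectic form and $\mathbb{1}$ is the $m\times m$ identity matrix.
   Context: The Chamon model (one qubit per cubic lattice site) in the Laurent polynomial formalism over $\mathbb{F}_2[x^{\pm1},y^{\pm1},z^{\pm1}]$ has stabilizer map $\sigma=\begin{pmatrix}(1+x^{-1})(y^{-1}+z^{-1})\\(1+y^{-1})(x^{-1}+z^{-1})\end{pmatrix}$ and excitation map $\epsilon=\sigma^\dagger\Omega_1=\begin{pmatrix}(1+y)(x+z)&(1+x)(y+z)\end{pmatrix}$, where $^\dagger$ is transposition with spatial inversion. Define the fracton creation operators $s_1=x^{m-1}(1+y+\dots+y^{m-1})(1+z/x+\dots+(z/x)^{m-1})(1,0)^T$ and $s_2=y^{m-1}(1+x+\dots+x^{m-1})(1+z/y+\dots+(z/y)^{m-1})(0,1)^T$, which satisfy $\epsilon s_1=(1+y^m)(x^m+z^m)$ and $\epsilon s_2=(1+x^m)(y^m+z^m)$. $s_i^{(m)}$ denotes the representation of $s_i$ after coarse-graining the lattice by a factor $m$ in each direction (translation variables $x'=x^m$, $y'=y^m$, $z'=z^m$). *)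

theory Defs
  imports Main "HOL-Library.Poly_Mapping" "HOL-Library.Product_Plus" "HOL-Library.Z2"
begin

text \<open>Laurent polynomials over F2 in x, y, z = group algebra F2[Z^3]:
  finitely supported maps from exponent triples to the field bit = F2.\<close>
type_synonym lpoly = "(int \<times> int \<times> int) \<Rightarrow>\<^sub>0 bit"

definition mono :: "int \<Rightarrow> int \<Rightarrow> int \<Rightarrow> lpoly" where
  "mono a b c = Poly_Mapping.single (a, b, c) 1"

definition X :: lpoly where "X = mono 1 0 0"
definition Y :: lpoly where "Y = mono 0 1 0"
definition Z :: lpoly where "Z = mono 0 0 1"
definition Xinv :: lpoly where "Xinv = mono (-1) 0 0"
definition Yinv :: lpoly where "Yinv = mono 0 (-1) 0"

text \<open>Spatial inversion x -> x^-1, y -> y^-1, z -> z^-1 (the entrywise part of the dagger).\<close>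
definition inv_sp :: "lpoly \<Rightarrow> lpoly" where
  "inv_sp f = Abs_poly_mapping (\<lambda>v. Poly_Mapping.lookup f (- v))"

text \<open>Coarse-graining by factor m: f = sum over (a,b,c) in {0..m-1}^3 of
  x^a y^b z^c f_abc(x^m, y^m, z^m); coarse m f (a,b,c) is f_abc as a Laurent polynomial
  in the coarse variables x' = x^m, y' = y^m, z' = z^m.\<close>
definition coarse :: "nat \<Rightarrow> lpoly \<Rightarrow> nat \<times> nat \<times> nat \<Rightarrow> lpoly" where
  "coarse m f abc = (case abc of (a, b, c) \<Rightarrow>
     Abs_poly_mapping (\<lambda>(p, q, r). Poly_Mapping.lookup f (int m * p + int a, int m * q + int b, int m * r + int c)))"

text \<open>A stabilizer vector for one qubit per site: pair (first, second) component.
  After coarse-graining it becomes a vector with 2 m^3 entries, the first m^3 entries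
  being coarse m (fst s) abc and the last m^3 being coarse m (snd s) abc.
  symp_form m u v = u^dagger Omega v with Omega = [[0, 1],[1, 0]] (blocks of size m^3).\<close>
definition symp_form :: "nat \<Rightarrow> lpoly \<times> lpoly \<Rightarrow> lpoly \<times> lpoly \<Rightarrow> lpoly" where
  "symp_form m u v =
     (\<Sum>abc \<in> {0..<m} \<times> {0..<m} \<times> {0..<m}.
        inv_sp (coarse m (fst u) abc) * coarse m (snd v) abc
      + inv_sp (coarse m (snd u) abc) * coarse m (fst v) abc)"

definition s1 :: "nat \<Rightarrow> lpoly \<times> lpoly" where
  "s1 m = (X ^ (m - 1) * (\<Sum>i<m. Y ^ i) * (\<Sum>j<m. (Z * Xinv) ^ j), 0)"

definition s2 :: "nat \<Rightarrow> lpoly \<times> lpoly" where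
  "s2 m = (0, Y ^ (m - 1) * (\<Sum>i<m. X ^ i) * (\<Sum>j<m. (Z * Yinv) ^ j))"

end

theory Submission
  imports Defs
begin

lemma mono_mult: "mono a b c * mono a' b' c' = mono (a+a') (b+b') (c+c')"
  by (simp add: mono_def mult_single)

lemma mono_0: "mono 0 0 0 = 1"
proof -
  have e: "(0::int, 0::int, 0::int) = 0" by (simp add: zero_prod_def)
  show ?thesis unfolding mono_def e by (rule single_one)
qed

lemma mono_pow: "mono a b c ^ n = mono (int n*a) (int n*b) (int n*c)"
  by (induction n) (simp_all add: mono_0 mono_mult algebra_simps)

lemma sum_ind_inj:
  assumes "inj_on k A" "finite A"
  shows "(\<Sum>x\<in>A. ((1::bit) when k x = v)) = (1 when v \<in> k ` A)"
proof (cases "v \<in> k ` A")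
  case True
  then obtain x0 where x0: "x0 \<in> A" "v = k x0" by blast
  have "(\<Sum>x\<in>A. ((1::bit) when k x = v)) = (\<Sum>x\<in>A. (if x = x0 then 1 else 0))"
    using assms(1) x0 by (intro sum.cong) (auto simp: when_def inj_on_def)
  also have "\<dots> = 1" using x0 assms(2) by simp
  finally show ?thesis using True by simp
next
  case False
  then show ?thesis by (auto intro!: sum.neutral simp: when_def)
qed

lemma fst_s1:
  assumes "m \<ge> 1"
  shows "fst (s1 m) = (\<Sum>(i,j)\<in>{..<m}\<times>{..<m}. mono (int m - 1 - int j) (int i) (int j))"
proof -
  have "fst (s1 m) = mono (int m - 1) 0 0 * (\<Sum>i<m. mono 0 (int i) 0) * (\<Sum>j<m. mono (- int j) 0 (int j))"
    using assms by (simp add: s1_def X_def Y_def Z_def Xinv_def mono_pow mono_mult of_nat_diff)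
  also have "\<dots> = (\<Sum>i<m. \<Sum>j<m. mono (int m - 1 - int j) (int i) (int j))"
    by (simp add: sum_distrib_left sum_distrib_right mono_mult) (rule sum.swap)
  also have "\<dots> = (\<Sum>(i,j)\<in>{..<m}\<times>{..<m}. mono (int m - 1 - int j) (int i) (int j))"
    by (simp add: sum.cartesian_product)
  finally show ?thesis .
qed

lemma snd_s2:
  assumes "m \<ge> 1"
  shows "snd (s2 m) = (\<Sum>(i,j)\<in>{..<m}\<times>{..<m}. mono (int i) (int m - 1 - int j) (int j))"
proof -
  have "snd (s2 m) = mono 0 (int m - 1) 0 * (\<Sum>i<m. mono (int i) 0 0) * (\<Sum>j<m. mono 0 (- int j) (int j))"
    using assms by (simp add: s2_def X_def Y_def Z_def Yinv_def mono_pow mono_mult of_nat_diff)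
  also have "\<dots> = (\<Sum>i<m. \<Sum>j<m. mono (int i) (int m - 1 - int j) (int j))"
    by (simp add: sum_distrib_left sum_distrib_right mono_mult) (rule sum.swap)
  also have "\<dots> = (\<Sum>(i,j)\<in>{..<m}\<times>{..<m}. mono (int i) (int m - 1 - int j) (int j))"
    by (simp add: sum.cartesian_product)
  finally show ?thesis .
qed

lemma digit0:
  fixes q b :: int
  assumes "0 \<le> m*q + b" "m*q + b < m" "0 \<le> b" "b < m"
  shows "q = 0"
proof (rule ccontr)
  assume "q \<noteq> 0"
  then consider "q \<ge> 1" | "q \<le> -1" by linarith
  then show False
  proof cases
    case 1
    then have "m*q \<ge> m*1" using assms by (intro mult_left_mono) auto
    then show False using assms by linarith
  next
    case 2
    then have "m*q \<le> m*(-1)" using assms by (intro mult_left_mono) auto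
    then show False using assms by linarith
  qed
qed

lemma lookup_fst_s1:
  assumes "m \<ge> 1"
  shows "Poly_Mapping.lookup (fst (s1 m)) v = (1 when v \<in> (\<lambda>(i::nat,j::nat). (int m - 1 - int j, int i, int j)) ` ({..<m}\<times>{..<m}))"
proof -
  let ?k = "\<lambda>(i::nat,j::nat). (int m - 1 - int j, int i, int j)"
  have "fst (s1 m) = (\<Sum>x\<in>{..<m}\<times>{..<m}. Poly_Mapping.single (?k x) 1)"
    unfolding fst_s1[OF assms] by (intro sum.cong) (auto simp: mono_def)
  then have "Poly_Mapping.lookup (fst (s1 m)) v = (\<Sum>x\<in>{..<m}\<times>{..<m}. (1 when ?k x = v))"
    by (simp add: lookup_sum lookup_single)
  also have "\<dots> = (1 when v \<in> ?k ` ({..<m}\<times>{..<m}))"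
    by (rule sum_ind_inj) (auto simp: inj_on_def)
  finally show ?thesis .
qed

lemma lookup_snd_s2:
  assumes "m \<ge> 1"
  shows "Poly_Mapping.lookup (snd (s2 m)) v = (1 when v \<in> (\<lambda>(i::nat,j::nat). (int i, int m - 1 - int j, int j)) ` ({..<m}\<times>{..<m}))"
proof -
  let ?k = "\<lambda>(i::nat,j::nat). (int i, int m - 1 - int j, int j)"
  have "snd (s2 m) = (\<Sum>x\<in>{..<m}\<times>{..<m}. Poly_Mapping.single (?k x) 1)"
    unfolding snd_s2[OF assms] by (intro sum.cong) (auto simp: mono_def)
  then have "Poly_Mapping.lookup (snd (s2 m)) v = (\<Sum>x\<in>{..<m}\<times>{..<m}. (1 when ?k x = v))"
    by (simp add: lookup_sum lookup_single)
  also have "\<dots> = (1 when v \<in> ?k ` ({..<m}\<times>{..<m}))"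
    by (rule sum_ind_inj) (auto simp: inj_on_def)
  finally show ?thesis .
qed

lemma mem1:
  assumes "a < m" "b < m" "c < m"
  shows "(int m*p + int a, int m*q + int b, int m*r + int c) \<in> (\<lambda>(i::nat,j::nat). (int m - 1 - int j, int i, int j)) ` ({..<m}\<times>{..<m})
     \<longleftrightarrow> p = 0 \<and> q = 0 \<and> r = 0 \<and> a + c = m - 1"
proof
  assume "(int m*p + int a, int m*q + int b, int m*r + int c) \<in> (\<lambda>(i::nat,j::nat). (int m - 1 - int j, int i, int j)) ` ({..<m}\<times>{..<m})"
  then obtain i j where ij: "i < m" "j < m" "int m - 1 - int j = int m*p + int a"
    "int i = int m*q + int b" "int j = int m*r + int c" by auto
  have q: "q = 0" by (rule digit0[of "int m" q "int b"]) (use ij assms in auto)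
  have r: "r = 0" by (rule digit0[of "int m" r "int c"]) (use ij assms in auto)
  have p: "p = 0" by (rule digit0[of "int m" p "int a"]) (use ij assms in auto)
  show "p = 0 \<and> q = 0 \<and> r = 0 \<and> a + c = m - 1" using p q r ij by auto
next
  assume h: "p = 0 \<and> q = 0 \<and> r = 0 \<and> a + c = m - 1"
  show "(int m*p + int a, int m*q + int b, int m*r + int c) \<in> (\<lambda>(i::nat,j::nat). (int m - 1 - int j, int i, int j)) ` ({..<m}\<times>{..<m})"
    using h assms by (intro image_eqI[of _ _ "(b,c)"]) auto
qed

lemma mem2:
  assumes "a < m" "b < m" "c < m"
  shows "(int m*p + int a, int m*q + int b, int m*r + int c) \<in> (\<lambda>(i::nat,j::nat). (int i, int m - 1 - int j, int j)) ` ({..<m}\<times>{..<m})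
     \<longleftrightarrow> p = 0 \<and> q = 0 \<and> r = 0 \<and> b + c = m - 1"
proof
  assume "(int m*p + int a, int m*q + int b, int m*r + int c) \<in> (\<lambda>(i::nat,j::nat). (int i, int m - 1 - int j, int j)) ` ({..<m}\<times>{..<m})"
  then obtain i j where ij: "i < m" "j < m" "int m - 1 - int j = int m*q + int b"
    "int i = int m*p + int a" "int j = int m*r + int c" by auto
  have q: "q = 0" by (rule digit0[of "int m" q "int b"]) (use ij assms in auto)
  have r: "r = 0" by (rule digit0[of "int m" r "int c"]) (use ij assms in auto)
  have p: "p = 0" by (rule digit0[of "int m" p "int a"]) (use ij assms in auto)
  show "p = 0 \<and> q = 0 \<and> r = 0 \<and> b + c = m - 1" using p q r ij by auto
next
  assume h: "p = 0 \<and> q = 0 \<and> r = 0 \<and> b + c = m - 1"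
  show "(int m*p + int a, int m*q + int b, int m*r + int c) \<in> (\<lambda>(i::nat,j::nat). (int i, int m - 1 - int j, int j)) ` ({..<m}\<times>{..<m})"
    using h assms by (intro image_eqI[of _ _ "(a,c)"]) auto
qed

lemma coarse_s1:
  assumes "m \<ge> 1" "a < m" "b < m" "c < m"
  shows "coarse m (fst (s1 m)) (a,b,c) = (if a + c = m - 1 then 1 else 0)"
proof -
  have "(\<lambda>(p, q, r). Poly_Mapping.lookup (fst (s1 m)) (int m * p + int a, int m * q + int b, int m * r + int c))
     = Poly_Mapping.lookup (if a + c = m - 1 then 1 else 0)"
    by (auto simp: fun_eq_iff lookup_fst_s1[OF assms(1)] mem1[OF assms(2-4)] lookup_one zero_prod_def)
  then show ?thesis unfolding coarse_def by simp
qed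

lemma coarse_s2:
  assumes "m \<ge> 1" "a < m" "b < m" "c < m"
  shows "coarse m (snd (s2 m)) (a,b,c) = (if b + c = m - 1 then 1 else 0)"
proof -
  have "(\<lambda>(p, q, r). Poly_Mapping.lookup (snd (s2 m)) (int m * p + int a, int m * q + int b, int m * r + int c))
     = Poly_Mapping.lookup (if b + c = m - 1 then 1 else 0)"
    by (auto simp: fun_eq_iff lookup_snd_s2[OF assms(1)] mem2[OF assms(2-4)] lookup_one zero_prod_def)
  then show ?thesis unfolding coarse_def by simp
qed

lemma coarse_zero: "coarse m 0 abc = 0"
proof -
  have "(\<lambda>(p::int, q::int, r::int). (0::bit)) = Poly_Mapping.lookup (0::lpoly)" by (auto simp: fun_eq_iff)
  then show ?thesis unfolding coarse_def by (cases abc) simp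
qed

lemma inv_sp_0: "inv_sp 0 = 0"
proof -
  have "(\<lambda>v::int\<times>int\<times>int. Poly_Mapping.lookup (0::lpoly) (- v)) = Poly_Mapping.lookup 0" by auto
  then show ?thesis unfolding inv_sp_def by simp
qed

lemma inv_sp_1: "inv_sp 1 = 1"
proof -
  have "(\<lambda>v::int\<times>int\<times>int. Poly_Mapping.lookup (1::lpoly) (- v)) = Poly_Mapping.lookup 1" by (auto simp: fun_eq_iff lookup_one)
  then show ?thesis unfolding inv_sp_def by simp
qed

lemma of_nat_odd_lpoly:
  assumes "odd m"
  shows "(of_nat m :: lpoly) = 1"
proof -
  obtain k where k: "m = 2*k + 1" using assms oddE by blast
  have "(of_nat m :: bit) = 1" unfolding k by simp
  then have "Poly_Mapping.single 0 (of_nat m :: bit) = 1" by simp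
  then show ?thesis by (metis single_of_nat)
qed

theorem lemma1:
  fixes m :: nat
  assumes "odd m"
  shows "symp_form m (s1 m) (s2 m) = 1"
proof -
  have m1: "m \<ge> 1" using assms by (cases m) auto
  let ?A = "{0..<m} \<times> {0..<m} \<times> {0..<m}"
  let ?P = "\<lambda>(a::nat,b::nat,c::nat). a + c = m - 1 \<and> b + c = m - 1"
  have s1z: "snd (s1 m) = 0" and s2z: "fst (s2 m) = 0" by (simp_all add: s1_def s2_def)
  have "symp_form m (s1 m) (s2 m) = (\<Sum>abc\<in>?A. if ?P abc then (1::lpoly) else 0)"
    unfolding symp_form_def s1z s2z
    by (intro sum.cong) (auto simp: coarse_zero inv_sp_0 inv_sp_1 coarse_s1[OF m1] coarse_s2[OF m1] split: if_splits)
  also have "\<dots> = (\<Sum>abc\<in>{x\<in>?A. ?P x}. (1::lpoly))"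
    by (rule sum.inter_filter[symmetric]) simp
  also have "{x\<in>?A. ?P x} = (\<lambda>c. (m - 1 - c, m - 1 - c, c)) ` {..<m}"
    using m1 by (auto simp: image_iff) 
  also have "(\<Sum>abc\<in>(\<lambda>c. (m - 1 - c, m - 1 - c, c)) ` {..<m}. (1::lpoly)) = of_nat m"
    proof -
    have "inj_on (\<lambda>c. (m - 1 - c, m - 1 - c, c)) {..<m}" by (auto simp: inj_on_def)
    then show ?thesis by (simp add: card_image)
  qed
  also have "\<dots> = 1" by (rule of_nat_odd_lpoly[OF assms])
  finally show ?thesis .
qed

end
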